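(* Let $X,Y$ be random variables on finite alphabets $\mathcal{X},\mathcal{Y}$ with $|\mathcal{X}|<|\mathcal{Y}|$ and joint pmf $P_{XY}$ whose marginals $P_X,P_Y$ have all entries positive, and suppose the $|\mathcal{X}|\times|\mathcal{Y}|$ matrix $P_{X|Y}$ has full row rank. Let $\epsilon\ge0$. Consider the problem of maximizing $I(U;Y)$ over all finite alphabets $\mathcal{U}$ and kernels $P_{U|Y}$, where the joint distribution is $P_{XYU}(x,y,u)=P_{XY}(x,y)P_{U|Y}(u|y)$ (so $X-Y-U$ is a Markov chain), subject to $\|P_{X|U=u}-P_X\|_1\le\epsilon$ for all $u\in\mathcal{U}$ (with $P_U(u)>0$). Then the supremum of this problem equals the supremum over those $U$ with $|\mathcal{U}|\le|\mathcal{Y}|$, and this supremum is achieved (so it is a maximum).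
   Context: $\|\cdot\|_1$ denotes the $\ell_1$ norm of a vector indexed by $\mathcal{X}$. The matrix $P_{X|Y}$ has entries $P_{X|Y}(x|y)$, rows indexed by $x$ and columns by $y$. *)

theory Defs
  imports "HOL-Analysis.Analysis"
begin

text \<open>The auxiliary alphabet of U is {..<k} (any finite alphabet up to relabelling);
  the kernel is W y u = P_{U|Y}(u|y).\<close>

definition is_pmf2 :: "('x::finite \<Rightarrow> 'y::finite \<Rightarrow> real) \<Rightarrow> bool" where
  "is_pmf2 P \<longleftrightarrow> (\<forall>x y. 0 \<le> P x y) \<and> (\<Sum>x\<in>UNIV. \<Sum>y\<in>UNIV. P x y) = 1"

definition marg_X :: "('x::finite \<Rightarrow> 'y::finite \<Rightarrow> real) \<Rightarrow> 'x \<Rightarrow> real" where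
  "marg_X P x = (\<Sum>y\<in>UNIV. P x y)"

definition marg_Y :: "('x::finite \<Rightarrow> 'y::finite \<Rightarrow> real) \<Rightarrow> 'y \<Rightarrow> real" where
  "marg_Y P y = (\<Sum>x\<in>UNIV. P x y)"

definition cond_XY_matrix :: "('x::finite \<Rightarrow> 'y::finite \<Rightarrow> real) \<Rightarrow> real^'y^'x" where
  "cond_XY_matrix P = (\<chi> x y. P x y / marg_Y P y)"

definition is_kernel :: "nat \<Rightarrow> ('y::finite \<Rightarrow> nat \<Rightarrow> real) \<Rightarrow> bool" where
  "is_kernel k W \<longleftrightarrow> (\<forall>y u. u < k \<longrightarrow> 0 \<le> W y u) \<and> (\<forall>y. (\<Sum>u<k. W y u) = 1)"

definition marg_U :: "('x::finite \<Rightarrow> 'y::finite \<Rightarrow> real) \<Rightarrow> ('y \<Rightarrow> nat \<Rightarrow> real) \<Rightarrow> nat \<Rightarrow> real" where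
  "marg_U P W u = (\<Sum>y\<in>UNIV. marg_Y P y * W y u)"

definition cond_XU :: "('x::finite \<Rightarrow> 'y::finite \<Rightarrow> real) \<Rightarrow> ('y \<Rightarrow> nat \<Rightarrow> real) \<Rightarrow> 'x \<Rightarrow> nat \<Rightarrow> real" where
  "cond_XU P W x u = (\<Sum>y\<in>UNIV. P x y * W y u) / marg_U P W u"

definition mutual_info_UY :: "('x::finite \<Rightarrow> 'y::finite \<Rightarrow> real) \<Rightarrow> nat \<Rightarrow> ('y \<Rightarrow> nat \<Rightarrow> real) \<Rightarrow> real" where
  "mutual_info_UY P k W =
     (\<Sum>y\<in>UNIV. \<Sum>u<k. (let q = marg_Y P y * W y u in
        if q = 0 then 0 else q * ln (W y u / marg_U P W u)))"

definition feasible :: "('x::finite \<Rightarrow> 'y::finite \<Rightarrow> real) \<Rightarrow> real \<Rightarrow> nat \<Rightarrow> ('y \<Rightarrow> nat \<Rightarrow> real) \<Rightarrow> bool" where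
  "feasible P eps k W \<longleftrightarrow> is_kernel k W \<and>
     (\<forall>u<k. 0 < marg_U P W u \<longrightarrow> (\<Sum>x\<in>UNIV. \<bar>cond_XU P W x u - marg_X P x\<bar>) \<le> eps)"

end

theory Submission
  imports Defs "HOL-Real_Asymp.Real_Asymp"
begin

definition fl :: "real \<Rightarrow> real" where "fl x = x * ln x"

definition colval :: "('x::finite \<Rightarrow> 'y::finite \<Rightarrow> real) \<Rightarrow> ('y \<Rightarrow> nat \<Rightarrow> real) \<Rightarrow> nat \<Rightarrow> real" where
  "colval P W u = (\<Sum>y\<in>UNIV. marg_Y P y * fl (W y u)) - fl (marg_U P W u)"

lemma colval_eq:
  fixes P :: "'x::finite \<Rightarrow> 'y::finite \<Rightarrow> real"
  assumes m: "\<forall>y. 0 < marg_Y P y" and W: "\<forall>y. 0 \<le> W y u"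
  shows "(\<Sum>y\<in>UNIV. (let q = marg_Y P y * W y u in
        if q = 0 then 0 else q * ln (W y u / marg_U P W u))) = colval P W u"
proof -
  have M0: "marg_U P W u \<ge> 0" unfolding marg_U_def using m W by (intro sum_nonneg mult_nonneg_nonneg) (auto simp: less_imp_le)
  show ?thesis
  proof (cases "marg_U P W u = 0")
    case True
    then have "\<forall>y. marg_Y P y * W y u = 0" unfolding marg_U_def
      using sum_nonneg_eq_0_iff[of UNIV "\<lambda>y. marg_Y P y * W y u"] m W by (auto simp: less_imp_le)
    then have "\<forall>y. W y u = 0" using m by (metis mult_eq_0_iff order_less_irrefl)
    then show ?thesis using True by (simp add: colval_def fl_def)
  next
    case False
    then have Mp: "marg_U P W u > 0" using M0 by auto
    have "\<And>y. (let q = marg_Y P y * W y u in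
        if q = 0 then 0 else q * ln (W y u / marg_U P W u)) = marg_Y P y * fl (W y u) - (marg_Y P y * W y u) * ln (marg_U P W u)"
    proof -
      fix y
      show "?thesis y"
      proof (cases "W y u = 0")
        case True then show ?thesis by (simp add: fl_def)
      next
        case False
        then have "W y u > 0" using W by (simp add: order_less_le)
        then show ?thesis using m[rule_format, of y] Mp
          by (simp add: fl_def ln_div algebra_simps)
      qed
    qed
    then have "(\<Sum>y\<in>UNIV. (let q = marg_Y P y * W y u in
        if q = 0 then 0 else q * ln (W y u / marg_U P W u))) = (\<Sum>y\<in>UNIV. marg_Y P y * fl (W y u)) - (\<Sum>y\<in>UNIV. marg_Y P y * W y u) * ln (marg_U P W u)"
      by (simp add: sum_subtractf sum_distrib_right)
    also have "\<dots> = colval P W u" by (simp add: colval_def fl_def marg_U_def)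
    finally show ?thesis .
  qed
qed

lemma mi_colval:
  fixes P :: "'x::finite \<Rightarrow> 'y::finite \<Rightarrow> real"
  assumes m: "\<forall>y. 0 < marg_Y P y" and W: "\<forall>y u. u < k \<longrightarrow> 0 \<le> W y u"
  shows "mutual_info_UY P k W = (\<Sum>u<k. colval P W u)"
  unfolding mutual_info_UY_def
  apply (subst sum.swap)
  apply (rule sum.cong[OF refl])
  apply (rule colval_eq[OF m]) using W by auto

lemma fl_cont: "continuous_on {0..} fl"
proof -
  have lim: "((\<lambda>x::real. x * ln x) \<longlongrightarrow> 0) (at_right 0)" by real_asymp
  show ?thesis unfolding continuous_on_eq_continuous_within
  proof
    fix x :: real assume "x \<in> {0..}"
    show "continuous (at x within {0..}) fl"
    proof (cases "x = 0")
      case True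
      have "fl = (\<lambda>x. x * ln x)" by (rule ext) (simp add: fl_def)
      then show ?thesis using lim True by (simp add: continuous_within fl_def at_within_Ici_at_right)
    next
      case False
      then have "x > 0" using \<open>x \<in> {0..}\<close> by auto
      then have "continuous (at x) fl" unfolding fl_def by (intro continuous_intros) auto
      then show ?thesis using continuous_at_imp_continuous_within by blast
    qed
  qed
qed

lemma col_zero:
  fixes P :: "'x::finite \<Rightarrow> 'y::finite \<Rightarrow> real"
  assumes m: "\<forall>y. 0 < marg_Y P y" and W: "\<forall>y. 0 \<le> W y u" and M: "marg_U P W u = 0"
  shows "W y u = 0"
proof -
  have "\<forall>y. marg_Y P y * W y u = 0" using M unfolding marg_U_def
    using sum_nonneg_eq_0_iff[of UNIV "\<lambda>y. marg_Y P y * W y u"] m W by (auto simp: less_imp_le)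
  then show ?thesis using m by (metis mult_eq_0_iff order_less_irrefl)
qed

lemma colval_zero:
  assumes "\<forall>y. W y u = 0"
  shows "colval P W u = 0" "marg_U P W u = 0"
  using assms by (simp_all add: colval_def marg_U_def fl_def)

lemma marg_U_nonneg:
  fixes P :: "'x::finite \<Rightarrow> 'y::finite \<Rightarrow> real"
  assumes m: "\<forall>y. 0 < marg_Y P y" and W: "\<forall>y. 0 \<le> W y u"
  shows "0 \<le> marg_U P W u"
  unfolding marg_U_def using m W by (intro sum_nonneg mult_nonneg_nonneg) (auto simp: less_imp_le)

lemma fl_scale: assumes "0 \<le> l" "0 \<le> a" shows "fl (l * a) = l * fl a + l * a * ln l"
proof (cases "l = 0 \<or> a = 0")
  case True then show ?thesis by (auto simp: fl_def)
next
  case False then have "l > 0" "a > 0" using assms by auto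
  then show ?thesis by (simp add: fl_def ln_mult algebra_simps)
qed

lemma colval_scale:
  fixes P :: "'x::finite \<Rightarrow> 'y::finite \<Rightarrow> real"
  assumes m: "\<forall>y. 0 < marg_Y P y" and W: "\<forall>y. 0 \<le> W y u" and l: "0 \<le> l"
    and W': "\<forall>y. W' y v = l * W y u"
  shows "colval P W' v = l * colval P W u" "marg_U P W' v = l * marg_U P W u"
proof -
  show MM: "marg_U P W' v = l * marg_U P W u" unfolding marg_U_def using W' by (simp add: sum_distrib_left algebra_simps)
  have M0: "0 \<le> marg_U P W u" using marg_U_nonneg[of P W u] m W by blast
  have "colval P W' v = (\<Sum>y\<in>UNIV. marg_Y P y * (l * fl (W y u) + l * W y u * ln l)) - (l * fl (marg_U P W u) + l * marg_U P W u * ln l)"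
    unfolding colval_def MM using fl_scale[OF l] W M0 W' by simp
  also have "\<dots> = l * colval P W u + l * ln l * ((\<Sum>y\<in>UNIV. marg_Y P y * W y u) - marg_U P W u)"
    by (simp add: colval_def algebra_simps sum.distrib sum_distrib_left sum_subtractf)
  also have "\<dots> = l * colval P W u" by (simp add: marg_U_def)
  finally show "colval P W' v = l * colval P W u" .
qed

lemma cond_XU_scale:
  assumes "0 < l" and W': "\<forall>y. W' y v = l * W y u"
  shows "cond_XU P W' x v = cond_XU P W x u"
proof -
  have "marg_U P W' v = l * marg_U P W u" unfolding marg_U_def using W' by (simp add: sum_distrib_left algebra_simps)
  moreover have "(\<Sum>y\<in>UNIV. P x y * W' y v) = l * (\<Sum>y\<in>UNIV. P x y * W y u)"
    using W' by (simp add: sum_distrib_left algebra_simps)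
  ultimately show ?thesis unfolding cond_XU_def using assms(1) by simp
qed

lemma dep:
  fixes col :: "nat \<Rightarrow> real^'y::finite"
  assumes "finite S" "card S > CARD('y)"
  shows "\<exists>c. (\<exists>u\<in>S. c u \<noteq> 0) \<and> (\<Sum>u\<in>S. c u *\<^sub>R col u) = 0"
proof (cases "inj_on col S")
  case False
  then obtain a b where ab: "a \<in> S" "b \<in> S" "a \<noteq> b" "col a = col b" unfolding inj_on_def by blast
  define c where "c u = (if u = a then 1 else if u = b then -1 else (0::real))" for u
  have "(\<Sum>u\<in>S. c u *\<^sub>R col u) = (\<Sum>u\<in>{a,b}. c u *\<^sub>R col u)"
    using ab assms(1) by (intro sum.mono_neutral_right) (auto simp: c_def)
  also have "\<dots> = 0" using ab by (simp add: c_def)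
  finally show ?thesis using ab by (intro exI[of _ c]) (auto simp: c_def)
next
  case True
  have "card (col ` S) = card S" using True by (simp add: card_image)
  then have "\<not> independent (col ` S)" using independent_bound[of "col ` S"] assms by auto
  then obtain a where a: "\<exists>v\<in>col ` S. a v \<noteq> 0" "(\<Sum>v\<in>col ` S. a v *\<^sub>R v) = 0"
    using dependent_finite[of "col ` S"] assms(1) by auto
  have "(\<Sum>u\<in>S. a (col u) *\<^sub>R col u) = (\<Sum>v\<in>col ` S. a v *\<^sub>R v)"
    using sum.reindex[OF True, of "\<lambda>v. a v *\<^sub>R v"] by simp
  then show ?thesis using a by (intro exI[of _ "\<lambda>u. a (col u)"]) auto
qed

lemma lp_reduce:
  fixes col :: "nat \<Rightarrow> real^'y::finite" and A M m :: "_ \<Rightarrow> real"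
  assumes U: "finite U" and M: "\<forall>u\<in>U. 0 \<le> M u" and Mdef: "\<forall>u. M u = (\<Sum>y\<in>UNIV. m y * col u $ y)"
  shows "\<forall>l. (\<forall>u\<in>U. 0 \<le> l u) \<and> (\<Sum>u\<in>U. l u *\<^sub>R col u) = b \<and> v0 \<le> (\<Sum>u\<in>U. l u * A u)
     \<and> card {u\<in>U. l u \<noteq> 0 \<and> M u \<noteq> 0} = n \<longrightarrow>
     (\<exists>l'. (\<forall>u\<in>U. 0 \<le> l' u) \<and> (\<Sum>u\<in>U. l' u *\<^sub>R col u) = b \<and> v0 \<le> (\<Sum>u\<in>U. l' u * A u)
     \<and> card {u\<in>U. l' u \<noteq> 0 \<and> M u \<noteq> 0} \<le> CARD('y))"
proof (induction n rule: less_induct)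
  case (less n)
  show ?case
  proof (intro allI impI)
    fix l assume H: "(\<forall>u\<in>U. 0 \<le> l u) \<and> (\<Sum>u\<in>U. l u *\<^sub>R col u) = b \<and> v0 \<le> (\<Sum>u\<in>U. l u * A u)
     \<and> card {u\<in>U. l u \<noteq> 0 \<and> M u \<noteq> 0} = n"
    define S where "S = {u\<in>U. l u \<noteq> 0 \<and> M u \<noteq> 0}"
    have SU: "S \<subseteq> U" and fS: "finite S" using U by (auto simp: S_def)
    show "\<exists>l'. (\<forall>u\<in>U. 0 \<le> l' u) \<and> (\<Sum>u\<in>U. l' u *\<^sub>R col u) = b \<and> v0 \<le> (\<Sum>u\<in>U. l' u * A u)
     \<and> card {u\<in>U. l' u \<noteq> 0 \<and> M u \<noteq> 0} \<le> CARD('y)"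
    proof (cases "n \<le> CARD('y)")
      case True then show ?thesis using H by blast
    next
      case False
      then have cS: "card S > CARD('y)" using H by (simp add: S_def)
      obtain c0 where c0: "\<exists>u\<in>S. c0 u \<noteq> 0" "(\<Sum>u\<in>S. c0 u *\<^sub>R col u) = 0"
        using dep[OF fS cS, of col] by blast
      define c1 where "c1 u = (if u \<in> S then c0 u else 0)" for u
      define c where "c = (if 0 \<le> (\<Sum>u\<in>U. c1 u * A u) then c1 else (\<lambda>u. - c1 u))"
      have cout: "\<And>u. u \<notin> S \<Longrightarrow> c u = 0" by (simp add: c_def c1_def)
      have cnz: "\<exists>u\<in>S. c u \<noteq> 0" using c0(1) by (auto simp: c_def c1_def)
      have c1sum: "(\<Sum>u\<in>U. c1 u *\<^sub>R col u) = 0"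
      proof -
        have "(\<Sum>u\<in>U. c1 u *\<^sub>R col u) = (\<Sum>u\<in>S. c1 u *\<^sub>R col u)"
          using SU U by (intro sum.mono_neutral_right) (auto simp: c1_def)
        also have "\<dots> = 0" using c0(2) by (simp add: c1_def)
        finally show ?thesis .
      qed
      have csum: "(\<Sum>u\<in>U. c u *\<^sub>R col u) = 0"
        using c1sum by (auto simp: c_def sum_negf)
      have cA: "0 \<le> (\<Sum>u\<in>U. c u * A u)" by (auto simp: c_def sum_negf)
      have cM: "(\<Sum>u\<in>S. c u * M u) = 0"
      proof -
        have "(\<Sum>u\<in>S. c u * M u) = (\<Sum>u\<in>U. c u * M u)"
          using SU U cout by (intro sum.mono_neutral_left) auto
        also have "\<dots> = (\<Sum>u\<in>U. \<Sum>y\<in>UNIV. c u * (m y * col u $ y))"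
          by (simp add: Mdef sum_distrib_left)
        also have "\<dots> = (\<Sum>y\<in>UNIV. \<Sum>u\<in>U. c u * (m y * col u $ y))"
          by (rule sum.swap)
        also have "\<dots> = (\<Sum>y\<in>UNIV. m y * (\<Sum>u\<in>U. c u *\<^sub>R col u) $ y)"
          by (simp add: sum_distrib_left mult.left_commute)
        also have "\<dots> = 0" using csum by simp
        finally show ?thesis .
      qed
      define N where "N = {u\<in>S. c u < 0}"
      have Nne: "N \<noteq> {}"
      proof
        assume "N = {}"
        then have cpos: "\<forall>u\<in>S. 0 \<le> c u" by (auto simp: N_def not_less)
        obtain u0 where u0: "u0 \<in> S" "c u0 \<noteq> 0" using cnz by blast
        have "0 < M u0" using u0(1) M SU by (force simp: S_def)
        then have "0 < c u0 * M u0" using u0 cpos by (simp add: order_less_le)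
        moreover have "\<forall>u\<in>S. 0 \<le> c u * M u" using cpos M SU by auto
        ultimately have "0 < (\<Sum>u\<in>S. c u * M u)" using fS u0(1) by (intro sum_pos2[of S u0]) auto
        then show False using cM by simp
      qed
      have fN: "finite N" using fS by (simp add: N_def)
      define r where "r u = l u / (- c u)" for u
      define t where "t = Min (r ` N)"
      have "t \<in> r ` N" using Min_in[of "r ` N"] fN Nne by (simp add: t_def)
      then obtain u0 where u0: "u0 \<in> N" "t = r u0" by blast
      have tle: "\<And>u. u \<in> N \<Longrightarrow> t \<le> r u" using fN by (simp add: t_def)
      have u0S: "u0 \<in> S" and cu0: "c u0 < 0" using u0 by (auto simp: N_def)
      have "0 \<le> l u0" using H u0S SU by auto
      then have t0: "0 \<le> t" using u0 cu0 by (simp add: r_def divide_nonneg_neg)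
      define l' where "l' u = l u + t * c u" for u
      have l'nn: "\<forall>u\<in>U. 0 \<le> l' u"
      proof
        fix u assume uU: "u \<in> U"
        show "0 \<le> l' u"
        proof (cases "c u < 0")
          case True
          then have "u \<in> N" using cout by (force simp: N_def)
          then have "t \<le> l u / (- c u)" using tle by (simp add: r_def)
          then have "t * (- c u) \<le> l u" using True by (simp add: field_simps)
          then show ?thesis by (simp add: l'_def algebra_simps)
        next
          case False then show ?thesis using H uU t0 by (simp add: l'_def)
        qed
      qed
      have "(\<Sum>u\<in>U. l' u *\<^sub>R col u) = (\<Sum>u\<in>U. l u *\<^sub>R col u) + t *\<^sub>R (\<Sum>u\<in>U. c u *\<^sub>R col u)"
        by (simp add: l'_def scaleR_add_left sum.distrib scaleR_sum_right)
      then have l'sum: "(\<Sum>u\<in>U. l' u *\<^sub>R col u) = b"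
        using H csum by simp
      have l'val: "v0 \<le> (\<Sum>u\<in>U. l' u * A u)"
      proof -
        have "(\<Sum>u\<in>U. l' u * A u) = (\<Sum>u\<in>U. l u * A u) + t * (\<Sum>u\<in>U. c u * A u)"
          by (simp add: l'_def algebra_simps sum.distrib sum_distrib_left)
        then show ?thesis using H cA t0 by (smt (verit) mult_nonneg_nonneg)
      qed
      have sub: "{u\<in>U. l' u \<noteq> 0 \<and> M u \<noteq> 0} \<subseteq> S - {u0}"
      proof
        fix u assume u: "u \<in> {u\<in>U. l' u \<noteq> 0 \<and> M u \<noteq> 0}"
        have "u \<noteq> u0" using u u0 cu0 by (auto simp: l'_def r_def)
        moreover have "u \<in> S"
        proof (rule ccontr)
          assume "u \<notin> S"
          then have "l' u = l u" using cout by (simp add: l'_def)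
          then show False using u \<open>u \<notin> S\<close> by (auto simp: S_def)
        qed
        ultimately show "u \<in> S - {u0}" by blast
      qed
      have "card {u\<in>U. l' u \<noteq> 0 \<and> M u \<noteq> 0} \<le> card (S - {u0})"
        using fS sub by (intro card_mono) auto
      also have "\<dots> < card S" using fS u0S by (rule card_Diff1_less)
      finally have "card {u\<in>U. l' u \<noteq> 0 \<and> M u \<noteq> 0} < n" using H by (simp add: S_def)
      then show ?thesis using less.IH l'nn l'sum l'val by blast
    qed
  qed
qed

lemma reduce:
  fixes P :: "'x::finite \<Rightarrow> 'y::finite \<Rightarrow> real"
  assumes m: "\<forall>y. 0 < marg_Y P y" and F: "feasible P eps k W"
  shows "\<exists>W'. feasible P eps CARD('y) W' \<and> mutual_info_UY P k W \<le> mutual_info_UY P CARD('y) W'"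
proof -
  have Wnn: "\<forall>y u. u<k \<longrightarrow> 0 \<le> W y u" and Wsum: "\<forall>y. (\<Sum>u<k. W y u) = 1"
    using F by (auto simp: feasible_def is_kernel_def)
  have Fc: "\<forall>u<k. 0 < marg_U P W u \<longrightarrow> (\<Sum>x\<in>UNIV. \<bar>cond_XU P W x u - marg_X P x\<bar>) \<le> eps"
    using F by (simp add: feasible_def)
  define col where "col u = (\<chi> y. W y u)" for u
  define b :: "real^'y" where "b = (\<chi> y. 1)"
  define A where "A u = colval P W u" for u
  define M where "M u = marg_U P W u" for u
  have Mnn: "\<forall>u\<in>{..<k}. 0 \<le> M u"
  proof
    fix u assume "u \<in> {..<k}"
    then have "\<forall>y. 0 \<le> W y u" using Wnn by auto
    then show "0 \<le> M u" unfolding M_def using marg_U_nonneg[of P W u] m by blast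
  qed
  have Mdef: "\<forall>u. M u = (\<Sum>y\<in>UNIV. marg_Y P y * col u $ y)" by (simp add: M_def marg_U_def col_def)
  have bsum: "(\<Sum>u<k. 1 *\<^sub>R col u) = b" by (simp add: vec_eq_iff col_def b_def Wsum)
  have LP: "\<forall>l. (\<forall>u\<in>{..<k}. 0 \<le> l u) \<and> (\<Sum>u<k. l u *\<^sub>R col u) = b \<and> (\<Sum>u<k. 1 * A u) \<le> (\<Sum>u<k. l u * A u)
     \<and> card {u\<in>{..<k}. l u \<noteq> 0 \<and> M u \<noteq> 0} = card {u\<in>{..<k}. (1::real) \<noteq> 0 \<and> M u \<noteq> 0} \<longrightarrow>
     (\<exists>l'. (\<forall>u\<in>{..<k}. 0 \<le> l' u) \<and> (\<Sum>u<k. l' u *\<^sub>R col u) = b \<and> (\<Sum>u<k. 1 * A u) \<le> (\<Sum>u<k. l' u * A u)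
     \<and> card {u\<in>{..<k}. l' u \<noteq> 0 \<and> M u \<noteq> 0} \<le> CARD('y))"
    by (rule lp_reduce[OF _ Mnn Mdef]) simp
  have "\<exists>l'. (\<forall>u\<in>{..<k}. 0 \<le> l' u) \<and> (\<Sum>u<k. l' u *\<^sub>R col u) = b \<and> (\<Sum>u<k. 1 * A u) \<le> (\<Sum>u<k. l' u * A u)
     \<and> card {u\<in>{..<k}. l' u \<noteq> 0 \<and> M u \<noteq> 0} \<le> CARD('y)"
    using LP[rule_format, of "\<lambda>_. 1"] bsum by simp
  then obtain l where l: "\<forall>u\<in>{..<k}. 0 \<le> l u" "(\<Sum>u<k. l u *\<^sub>R col u) = b"
      "(\<Sum>u<k. 1 * A u) \<le> (\<Sum>u<k. l u * A u)" "card {u\<in>{..<k}. l u \<noteq> 0 \<and> M u \<noteq> 0} \<le> CARD('y)"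
    by blast
  define S where "S = {u\<in>{..<k}. l u \<noteq> 0 \<and> M u \<noteq> 0}"
  define n where "n = card S"
  have fS: "finite S" by (simp add: S_def)
  obtain g where g: "bij_betw g {0..<n} S" using ex_bij_betw_nat_finite[OF fS] by (auto simp: n_def)
  have nK: "n \<le> CARD('y)" using l(4) by (simp add: n_def S_def)
  define W' where "W' y i = (if i < n then l (g i) * W y (g i) else 0)" for y i
  have gS: "\<And>i. i < n \<Longrightarrow> g i \<in> S" using g by (auto simp: bij_betw_def)
  have Sk: "\<And>u. u \<in> S \<Longrightarrow> u < k" by (simp add: S_def)
  have W'col: "\<And>i. i < n \<Longrightarrow> \<forall>y. W' y i = l (g i) * W y (g i)" by (simp add: W'_def)
  have W'zero: "\<And>i. \<not> i < n \<Longrightarrow> \<forall>y. W' y i = 0" by (simp add: W'_def)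
  have offS: "\<And>u y. u < k \<Longrightarrow> u \<notin> S \<Longrightarrow> l u * W y u = 0"
  proof -
    fix u y assume u: "u < k" "u \<notin> S"
    show "l u * W y u = 0"
    proof (cases "l u = 0")
      case False
      then have "marg_U P W u = 0" using u by (simp add: S_def M_def)
      then have "W y u = 0" using col_zero[of P W u y] m Wnn u by auto
      then show ?thesis by simp
    qed simp
  qed
  have W'nn: "\<forall>y i. i < CARD('y) \<longrightarrow> 0 \<le> W' y i"
    using l(1) Wnn gS Sk by (simp add: W'_def)
  have W'sum: "\<forall>y. (\<Sum>i<CARD('y). W' y i) = 1"
  proof
    fix y
    have "(\<Sum>i<CARD('y). W' y i) = (\<Sum>i\<in>{0..<n}. W' y i)"
      using nK W'zero by (intro sum.mono_neutral_right) (auto simp: not_less)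
    also have "\<dots> = (\<Sum>i\<in>{0..<n}. l (g i) * W y (g i))" by (simp add: W'_def)
    also have "\<dots> = (\<Sum>u\<in>S. l u * W y u)" using sum.reindex_bij_betw[OF g, of "\<lambda>u. l u * W y u"] by simp
    also have "\<dots> = (\<Sum>u<k. l u * W y u)" using Sk offS by (intro sum.mono_neutral_left) auto
    also have "\<dots> = (\<Sum>u<k. l u *\<^sub>R col u) $ y" by (simp add: col_def)
    also have "\<dots> = 1" using l(2) by (simp add: b_def)
    finally show "(\<Sum>i<CARD('y). W' y i) = 1" .
  qed
  have Fc': "\<forall>i<CARD('y). 0 < marg_U P W' i \<longrightarrow> (\<Sum>x\<in>UNIV. \<bar>cond_XU P W' x i - marg_X P x\<bar>) \<le> eps"
  proof (intro allI impI)
    fix i assume i: "i < CARD('y)" "0 < marg_U P W' i"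
    have "i < n" using i(2) W'zero colval_zero(2)[of W' i P] by fastforce
    define u where "u = g i"
    have uS: "u \<in> S" using gS \<open>i < n\<close> by (simp add: u_def)
    have Wu: "\<forall>y. 0 \<le> W y u" using Wnn Sk uS by auto
    have lu: "0 \<le> l u" using l(1) Sk uS by auto
    have mm: "marg_U P W' i = l u * marg_U P W u"
      using colval_scale(2)[where P=P and W=W and u=u and l="l u" and W'=W' and v=i, OF m Wu lu] W'col[OF \<open>i < n\<close>] by (simp add: u_def)
    have Mu: "0 \<le> marg_U P W u" using marg_U_nonneg[of P W u] m Wu by blast
    have lp: "0 < l u" and Mp: "0 < marg_U P W u"
      using i(2) mm lu Mu by (auto simp: zero_less_mult_iff)
    have "\<And>x. cond_XU P W' x i = cond_XU P W x u"
      using cond_XU_scale[where W'=W' and v=i and W=W and u=u and l="l u", OF lp] W'col[OF \<open>i < n\<close>] by (simp add: u_def)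
    then show "(\<Sum>x\<in>UNIV. \<bar>cond_XU P W' x i - marg_X P x\<bar>) \<le> eps"
      using Fc Mp Sk uS by auto
  qed
  have feas: "feasible P eps CARD('y) W'"
    using W'nn W'sum Fc' by (simp add: feasible_def is_kernel_def)
  have "mutual_info_UY P CARD('y) W' = (\<Sum>i<CARD('y). colval P W' i)"
    by (rule mi_colval[OF m W'nn])
  also have "\<dots> = (\<Sum>i\<in>{0..<n}. colval P W' i)"
    using nK by (intro sum.mono_neutral_right) (auto simp: not_less W'_def colval_def marg_U_def fl_def)
  also have "\<dots> = (\<Sum>i\<in>{0..<n}. l (g i) * colval P W (g i))"
  proof (rule sum.cong[OF refl])
    fix i assume "i \<in> {0..<n}"
    then have i: "i < n" by simp
    have Wu: "\<forall>y. 0 \<le> W y (g i)" using Wnn Sk gS[OF i] by auto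
    have lu: "0 \<le> l (g i)" using l(1) Sk gS[OF i] by auto
    show "colval P W' i = l (g i) * colval P W (g i)"
      using colval_scale(1)[where P=P and W=W and u="g i" and l="l (g i)" and W'=W' and v=i, OF m Wu lu] W'col[OF i] by simp
  qed
  also have "\<dots> = (\<Sum>u\<in>S. l u * A u)" using sum.reindex_bij_betw[OF g, of "\<lambda>u. l u * A u"] by (simp add: A_def)
  also have "\<dots> = (\<Sum>u<k. l u * A u)"
  proof (intro sum.mono_neutral_left)
    show "\<forall>u\<in>{..<k} - S. l u * A u = 0"
    proof
      fix u assume u: "u \<in> {..<k} - S"
      show "l u * A u = 0"
      proof (cases "l u = 0")
        case False
        then have "marg_U P W u = 0" using u by (simp add: S_def M_def)
        then have "\<forall>y. W y u = 0" using col_zero[of P W u] m Wnn u by auto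
        then show ?thesis by (simp add: A_def colval_zero)
      qed simp
    qed
  qed (use Sk in auto)
  finally have "mutual_info_UY P CARD('y) W' = (\<Sum>u<k. l u * A u)" .
  moreover have "mutual_info_UY P k W = (\<Sum>u<k. 1 * A u)" using mi_colval[OF m Wnn] by (simp add: A_def)
  ultimately show ?thesis using feas l(3) by auto
qed

lemma colcon:
  fixes S B :: "'x::finite \<Rightarrow> real"
  assumes "0 < M"
  shows "(\<Sum>x\<in>UNIV. \<bar>S x / M - B x\<bar>) \<le> eps \<longleftrightarrow> (\<Sum>x\<in>UNIV. \<bar>S x - M * B x\<bar>) \<le> eps * M"
proof -
  have "\<And>x. \<bar>S x / M - B x\<bar> = \<bar>S x - M * B x\<bar> / M"
  proof -
    fix x
    have "S x / M - B x = (S x - M * B x) / M" using assms by (simp add: field_simps)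
    then show "\<bar>S x / M - B x\<bar> = \<bar>S x - M * B x\<bar> / M" using assms by simp
  qed
  then have "(\<Sum>x\<in>UNIV. \<bar>S x / M - B x\<bar>) = (\<Sum>x\<in>UNIV. \<bar>S x - M * B x\<bar>) / M"
    by (simp add: sum_divide_distrib)
  then show ?thesis using assms by (simp add: pos_divide_le_eq)
qed

lemma mi_cong:
  assumes "\<forall>y u. u < k \<longrightarrow> W y u = W' y u" "u < k"
  shows "colval P W u = colval P W' u"
  using assms by (simp add: colval_def marg_U_def)

lemma attain:
  fixes P :: "'x::finite \<Rightarrow> 'y::finite \<Rightarrow> real"
  assumes pmf: "is_pmf2 P" and m: "\<forall>y. 0 < marg_Y P y" and eps: "0 \<le> eps"
  shows "\<exists>W0. feasible P eps CARD('y) W0 \<and>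
     (\<forall>W. feasible P eps CARD('y) W \<longrightarrow> mutual_info_UY P CARD('y) W \<le> mutual_info_UY P CARD('y) W0)"
proof -
  define K0 where "K0 = CARD('y)"
  have K0p: "0 < K0" by (simp add: K0_def)
  obtain h where h: "bij_betw h {0..<K0} (UNIV::'y set)"
    using ex_bij_betw_nat_finite[of "UNIV::'y set"] by (auto simp: K0_def)
  define hi where "hi = inv_into {0..<K0} h"
  have hi: "bij_betw hi UNIV {0..<K0}" using bij_betw_inv_into[OF h] by (simp add: hi_def)
  have hih: "\<And>u. u < K0 \<Longrightarrow> hi (h u) = u"
    using h by (auto simp: hi_def bij_betw_def inv_into_f_f)
  have hilt: "\<And>j. hi j < K0" using hi by (auto simp: bij_betw_def)
  define Wof :: "real^'y^'y \<Rightarrow> 'y \<Rightarrow> nat \<Rightarrow> real" where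
    "Wof v y u = (if u < K0 then v$y$(h u) else 0)" for v y u
  define vof :: "('y \<Rightarrow> nat \<Rightarrow> real) \<Rightarrow> real^'y^'y" where "vof W = (\<chi> y j. W y (hi j))" for W
  define G :: "real^'y^'y \<Rightarrow> real" where
    "G v = (\<Sum>j\<in>UNIV. (\<Sum>y\<in>UNIV. marg_Y P y * fl (v$y$j)) - fl (\<Sum>y\<in>UNIV. marg_Y P y * v$y$j))" for v
  define K where "K = {v::real^'y^'y. (\<forall>y j. 0 \<le> v$y$j) \<and> (\<forall>y. (\<Sum>j\<in>UNIV. v$y$j) = 1) \<and>
     (\<forall>j. (\<Sum>x\<in>UNIV. \<bar>(\<Sum>y\<in>UNIV. P x y * v$y$j) - (\<Sum>y\<in>UNIV. marg_Y P y * v$y$j) * marg_X P x\<bar>)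
          \<le> eps * (\<Sum>y\<in>UNIV. marg_Y P y * v$y$j))}"
  have mnn: "\<And>y. 0 \<le> marg_Y P y" using m less_imp_le by blast
  have C1: "mutual_info_UY P K0 (Wof v) = G v" if vnn: "\<forall>y j. 0 \<le> v$y$j" for v
  proof -
    have "mutual_info_UY P K0 (Wof v) = (\<Sum>u<K0. colval P (Wof v) u)"
      by (rule mi_colval[OF m]) (simp add: Wof_def vnn)
    also have "\<dots> = (\<Sum>u\<in>{0..<K0}. (\<lambda>j. (\<Sum>y\<in>UNIV. marg_Y P y * fl (v$y$j)) - fl (\<Sum>y\<in>UNIV. marg_Y P y * v$y$j)) (h u))"
      by (intro sum.cong) (auto simp: colval_def marg_U_def Wof_def)
    also have "\<dots> = G v" unfolding G_def by (rule sum.reindex_bij_betw[OF h])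
    finally show ?thesis .
  qed
  have C2: "feasible P eps K0 (Wof v)" if vK: "v \<in> K" for v
  proof -
    have vnn: "\<forall>y j. 0 \<le> v$y$j" and vs: "\<forall>y. (\<Sum>j\<in>UNIV. v$y$j) = 1"
      and vc: "\<forall>j. (\<Sum>x\<in>UNIV. \<bar>(\<Sum>y\<in>UNIV. P x y * v$y$j) - (\<Sum>y\<in>UNIV. marg_Y P y * v$y$j) * marg_X P x\<bar>)
          \<le> eps * (\<Sum>y\<in>UNIV. marg_Y P y * v$y$j)" using vK by (auto simp: K_def)
    have ker: "is_kernel K0 (Wof v)"
      unfolding is_kernel_def
    proof (intro conjI allI impI)
      fix y u assume "u < K0" then show "0 \<le> Wof v y u" by (simp add: Wof_def vnn)
    next
      fix y
      have "(\<Sum>u<K0. Wof v y u) = (\<Sum>u\<in>{0..<K0}. (\<lambda>j. v$y$j) (h u))"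
        by (intro sum.cong) (auto simp: Wof_def)
      also have "\<dots> = (\<Sum>j\<in>UNIV. v$y$j)" by (rule sum.reindex_bij_betw[OF h])
      finally show "(\<Sum>u<K0. Wof v y u) = 1" using vs by simp
    qed
    have "(\<Sum>x\<in>UNIV. \<bar>cond_XU P (Wof v) x u - marg_X P x\<bar>) \<le> eps"
      if u: "u < K0" "0 < marg_U P (Wof v) u" for u
    proof -
      have mu: "marg_U P (Wof v) u = (\<Sum>y\<in>UNIV. marg_Y P y * v$y$(h u))" using u by (simp add: marg_U_def Wof_def)
      have cu: "\<And>x. cond_XU P (Wof v) x u = (\<Sum>y\<in>UNIV. P x y * v$y$(h u)) / marg_U P (Wof v) u"
        using u by (simp add: cond_XU_def Wof_def)
      show ?thesis unfolding cu
        using colcon[OF u(2), of "\<lambda>x. \<Sum>y\<in>UNIV. P x y * v$y$(h u)" "marg_X P" eps] vc mu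
        by (simp add: mult.commute)
    qed
    then show ?thesis using ker by (simp add: feasible_def)
  qed
  have C3: "vof W \<in> K \<and> (\<forall>y u. u < K0 \<longrightarrow> Wof (vof W) y u = W y u)" if F: "feasible P eps K0 W" for W
  proof -
    have Wnn: "\<forall>y u. u<K0 \<longrightarrow> 0 \<le> W y u" and Wsum: "\<forall>y. (\<Sum>u<K0. W y u) = 1"
      and Fc: "\<forall>u<K0. 0 < marg_U P W u \<longrightarrow> (\<Sum>x\<in>UNIV. \<bar>cond_XU P W x u - marg_X P x\<bar>) \<le> eps"
      using F by (auto simp: feasible_def is_kernel_def)
    have a: "\<forall>y j. 0 \<le> vof W $y$j" using Wnn hilt by (simp add: vof_def)
    have b: "\<forall>y. (\<Sum>j\<in>UNIV. vof W $y$j) = 1"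
    proof
      fix y
      have "(\<Sum>j\<in>UNIV. vof W $y$j) = (\<Sum>j\<in>UNIV. (\<lambda>u. W y u) (hi j))" by (simp add: vof_def)
      also have "\<dots> = (\<Sum>u\<in>{0..<K0}. W y u)" by (rule sum.reindex_bij_betw[OF hi])
      finally show "(\<Sum>j\<in>UNIV. vof W $y$j) = 1" using Wsum by (simp add: lessThan_atLeast0)
    qed
    have c: "(\<Sum>x\<in>UNIV. \<bar>(\<Sum>y\<in>UNIV. P x y * vof W $y$j) - (\<Sum>y\<in>UNIV. marg_Y P y * vof W $y$j) * marg_X P x\<bar>)
          \<le> eps * (\<Sum>y\<in>UNIV. marg_Y P y * vof W $y$j)" for j
    proof -
      define u where "u = hi j"
      have u: "u < K0" using hilt by (simp add: u_def)
      have Wu: "\<forall>y. 0 \<le> W y u" using Wnn u by auto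
      have e1: "(\<Sum>y\<in>UNIV. marg_Y P y * vof W $y$j) = marg_U P W u" by (simp add: vof_def u_def marg_U_def)
      have e2: "\<And>x. (\<Sum>y\<in>UNIV. P x y * vof W $y$j) = (\<Sum>y\<in>UNIV. P x y * W y u)" by (simp add: vof_def u_def)
      show ?thesis
      proof (cases "marg_U P W u = 0")
        case True
        then have "\<forall>y. W y u = 0" using col_zero[of P W u] m Wu by auto
        then show ?thesis unfolding e1 e2 using True by simp
      next
        case False
        then have Mp: "0 < marg_U P W u" using marg_U_nonneg[of P W u] m Wu by auto
        have "(\<Sum>x\<in>UNIV. \<bar>(\<Sum>y\<in>UNIV. P x y * W y u) / marg_U P W u - marg_X P x\<bar>) \<le> eps"
          using Fc u Mp by (simp add: cond_XU_def)
        then show ?thesis unfolding e1 e2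
          using colcon[OF Mp, of "\<lambda>x. \<Sum>y\<in>UNIV. P x y * W y u" "marg_X P" eps] by (simp add: mult.commute)
      qed
    qed
    have d: "\<forall>y u. u < K0 \<longrightarrow> Wof (vof W) y u = W y u" by (simp add: Wof_def vof_def hih)
    show ?thesis using a b c d by (simp add: K_def)
  qed
  have clo: "closed K" unfolding K_def
    by (intro closed_Collect_conj closed_Collect_all closed_Collect_le closed_Collect_eq continuous_intros)
  have bnd: "bounded K" unfolding bounded_iff
  proof (intro exI ballI)
    fix v assume vK: "v \<in> K"
    have "norm v \<le> (\<Sum>y\<in>UNIV. norm (v$y))" unfolding norm_vec_def by (rule L2_set_le_sum) simp
    also have "\<dots> \<le> (\<Sum>y\<in>UNIV. (\<Sum>j\<in>UNIV. \<bar>v$y$j\<bar>))" by (intro sum_mono norm_le_l1_cart)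
    also have "\<dots> = (\<Sum>y\<in>(UNIV::'y set). (1::real))"
    proof (rule sum.cong[OF refl])
      fix y
      have "\<forall>j. 0 \<le> v$y$j" "(\<Sum>j\<in>UNIV. v$y$j) = 1" using vK unfolding K_def by blast+
      then show "(\<Sum>j\<in>UNIV. \<bar>v$y$j\<bar>) = 1" by simp
    qed
    finally show "norm v \<le> real CARD('y)" by simp
  qed
  have cpt: "compact K" using clo bnd by (simp add: compact_eq_bounded_closed)
  define vs :: "real^'y^'y" where "vs = (\<chi> y j. if j = h 0 then 1 else 0)"
  have sumY: "(\<Sum>y\<in>UNIV. marg_Y P y) = 1"
  proof -
    have "(\<Sum>y\<in>UNIV. marg_Y P y) = (\<Sum>y\<in>UNIV. \<Sum>x\<in>UNIV. P x y)" by (simp add: marg_Y_def)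
    also have "\<dots> = (\<Sum>x\<in>UNIV. \<Sum>y\<in>UNIV. P x y)" by (rule sum.swap)
    also have "\<dots> = 1" using pmf by (simp add: is_pmf2_def)
    finally show ?thesis .
  qed
  have vsn: "\<And>y j. vs$y$j = (if j = h 0 then 1 else 0)" by (simp add: vs_def)
  have vsK: "vs \<in> K" unfolding K_def
  proof (intro CollectI conjI allI)
    fix y j show "0 \<le> vs$y$j" by (simp add: vsn)
  next
    fix y show "(\<Sum>j\<in>UNIV. vs$y$j) = 1" by (simp add: vsn)
  next
    fix j
    show "(\<Sum>x\<in>UNIV. \<bar>(\<Sum>y\<in>UNIV. P x y * vs$y$j) - (\<Sum>y\<in>UNIV. marg_Y P y * vs$y$j) * marg_X P x\<bar>)
          \<le> eps * (\<Sum>y\<in>UNIV. marg_Y P y * vs$y$j)"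
    proof (cases "j = h 0")
      case True
      then show ?thesis by (simp add: vsn sumY marg_X_def eps)
    next
      case False
      then show ?thesis by (simp add: vsn)
    qed
  qed
  have ne: "K \<noteq> {}" using vsK by blast
  have Knn: "\<And>v y j. v \<in> K \<Longrightarrow> 0 \<le> v$y$j" by (simp add: K_def)
  have c1: "continuous_on K (\<lambda>v. fl (v$y$j))" for y j
    by (rule continuous_on_compose2[OF fl_cont]) (auto intro!: continuous_intros simp: Knn)
  have c2: "continuous_on K (\<lambda>v. fl (\<Sum>y\<in>UNIV. marg_Y P y * v$y$j))" for j
    by (rule continuous_on_compose2[OF fl_cont])
      (auto intro!: continuous_intros sum_nonneg mult_nonneg_nonneg simp: Knn mnn)
  have cG: "continuous_on K G" unfolding G_def
    by (intro continuous_intros c1 c2)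
  obtain v0 where v0: "v0 \<in> K" "\<forall>v\<in>K. G v \<le> G v0" using continuous_attains_sup[OF cpt ne cG] by blast
  show ?thesis
  proof (intro exI conjI allI impI)
    show "feasible P eps CARD('y) (Wof v0)" using C2[OF v0(1)] by (simp add: K0_def)
  next
    fix W assume F: "feasible P eps CARD('y) W"
    then have F': "feasible P eps K0 W" by (simp add: K0_def)
    have Wnn: "\<forall>y u. u<K0 \<longrightarrow> 0 \<le> W y u" using F' by (auto simp: feasible_def is_kernel_def)
    have "mutual_info_UY P K0 W = (\<Sum>u<K0. colval P W u)" by (rule mi_colval[OF m Wnn])
    also have "\<dots> = (\<Sum>u<K0. colval P (Wof (vof W)) u)"
      using C3[OF F'] by (intro sum.cong refl mi_cong[of K0]) auto
    also have "\<dots> = mutual_info_UY P K0 (Wof (vof W))"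
      by (rule mi_colval[OF m, symmetric]) (simp add: Wof_def Knn[OF C3[OF F', THEN conjunct1]])
    also have "\<dots> = G (vof W)" using C1 Knn[OF C3[OF F', THEN conjunct1]] by blast
    also have "\<dots> \<le> G v0" using v0 C3[OF F'] by blast
    also have "\<dots> = mutual_info_UY P K0 (Wof v0)" using C1 Knn[OF v0(1)] by simp
    finally show "mutual_info_UY P CARD('y) W \<le> mutual_info_UY P CARD('y) (Wof v0)" by (simp add: K0_def)
  qed
qed

theorem proposition2:
  fixes P :: "'x::finite \<Rightarrow> 'y::finite \<Rightarrow> real" and eps :: real
  assumes "is_pmf2 P"
    and "\<forall>x. 0 < marg_X P x"
    and "\<forall>y. 0 < marg_Y P y"
    and "CARD('x) < CARD('y)"
    and "rank (cond_XY_matrix P) = CARD('x)"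
    and "0 \<le> eps"
  shows "Sup {mutual_info_UY P k W | k W. feasible P eps k W}
           = Sup {mutual_info_UY P k W | k W. feasible P eps k W \<and> k \<le> CARD('y)}
         \<and> (\<exists>k0 W0. feasible P eps k0 W0 \<and> k0 \<le> CARD('y) \<and>
              (\<forall>k W. feasible P eps k W \<longrightarrow> mutual_info_UY P k W \<le> mutual_info_UY P k0 W0))"
proof -
  obtain W0 where W0: "feasible P eps CARD('y) W0"
    "\<forall>W. feasible P eps CARD('y) W \<longrightarrow> mutual_info_UY P CARD('y) W \<le> mutual_info_UY P CARD('y) W0"
    using attain[OF assms(1) assms(3) assms(6)] by blast
  define I0 where "I0 = mutual_info_UY P CARD('y) W0"
  have upper: "mutual_info_UY P k W \<le> I0" if F: "feasible P eps k W" for k W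
  proof -
    obtain W' where W': "feasible P eps CARD('y) W'" "mutual_info_UY P k W \<le> mutual_info_UY P CARD('y) W'"
      using reduce[OF assms(3) F] by blast
    then show ?thesis using W0(2) by (auto simp: I0_def intro: order_trans)
  qed
  have s1: "Sup {mutual_info_UY P k W | k W. feasible P eps k W} = I0"
    by (rule cSup_eq_maximum) (use W0 upper in \<open>auto simp: I0_def\<close>)
  have s2: "Sup {mutual_info_UY P k W | k W. feasible P eps k W \<and> k \<le> CARD('y)} = I0"
    by (rule cSup_eq_maximum) (use W0 upper in \<open>auto simp: I0_def\<close>)
  show ?thesis using s1 s2 W0(1) upper unfolding I0_def by auto
qed

end
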